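(* Let $\omega\in\{0,\infty\}$ and let $f,g:(0,\infty)\to(0,\infty)$ be such that (1) $f$ is nondecreasing; (2) $g$ is $\rho$-regularly varying at $\omega$ for some $\rho>0$, i.e. $\lim_{t\to\omega}g(tx)/g(t)=x^\rho$ for all $x>0$; (3) $\lim_{x\to\omega}f(x)/g(x)=\alpha\in[0,\infty)$. If $M_n\to\omega$ and $u_n\to u\in[0,\infty)$ (with $M_n,u_n>0$), then $\lim_{n\to\infty}f(M_nu_n)/g(M_n)=\alpha u^\rho$. *)

theory Defs
  imports Complex_Main
begin

definition omega_filter :: "bool \<Rightarrow> real filter" where
  "omega_filter at_infty = (if at_infty then at_top else at_right 0)"

end

theory Submission
  imports Defs
begin

theorem lemmaB2:
  fixes f g :: "real \<Rightarrow> real" and \<omega> :: bool and \<rho> \<alpha> u :: real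
    and M uu :: "nat \<Rightarrow> real"
  assumes f_pos: "\<And>x. x > 0 \<Longrightarrow> f x > 0"
    and g_pos: "\<And>x. x > 0 \<Longrightarrow> g x > 0"
    and f_mono: "mono_on {0<..} f"
    and rho_pos: "\<rho> > 0"
    and g_rv: "\<And>x. x > 0 \<Longrightarrow> ((\<lambda>t. g (t * x) / g t) \<longlongrightarrow> x powr \<rho>) (omega_filter \<omega>)"
    and alpha_nonneg: "\<alpha> \<ge> 0"
    and fg_lim: "((\<lambda>x. f x / g x) \<longlongrightarrow> \<alpha>) (omega_filter \<omega>)"
    and M_pos: "\<And>n. M n > 0"
    and M_lim: "filterlim M (omega_filter \<omega>) sequentially"
    and uu_pos: "\<And>n. uu n > 0"
    and u_nonneg: "u \<ge> 0"
    and uu_lim: "uu \<longlonglongrightarrow> u"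
  shows "(\<lambda>n. f (M n * uu n) / g (M n)) \<longlonglongrightarrow> \<alpha> * u powr \<rho>"
proof -
  have key: "(\<lambda>n. f (M n * x) / g (M n)) \<longlonglongrightarrow> \<alpha> * x powr \<rho>" if x: "x > 0" for x
  proof -
    have Mx: "filterlim (\<lambda>n. M n * x) (omega_filter \<omega>) sequentially"
    proof (cases \<omega>)
      case True
      then have "filterlim M at_top sequentially" using M_lim by (simp add: omega_filter_def)
      then have "filterlim (\<lambda>n. M n * x) at_top sequentially"
        by (rule filterlim_at_top_mult_tendsto_pos[OF tendsto_const x])
      then show ?thesis using True by (simp add: omega_filter_def)
    next
      case False
      then have "filterlim M (at_right 0) sequentially" using M_lim by (simp add: omega_filter_def)
      then have "M \<longlonglongrightarrow> 0" by (simp add: filterlim_at_right_to_0 filterlim_at tendsto_at_right_sequentially)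
      then have "(\<lambda>n. M n * x) \<longlonglongrightarrow> 0" using tendsto_mult_left_zero by blast
      moreover have "\<forall>\<^sub>F n in sequentially. 0 < M n * x" using M_pos x by simp
      ultimately have "filterlim (\<lambda>n. M n * x) (at_right 0) sequentially"
        by (rule tendsto_imp_filterlim_at_right)
      then show ?thesis using False by (simp add: omega_filter_def)
    qed
    have A: "(\<lambda>n. f (M n * x) / g (M n * x)) \<longlonglongrightarrow> \<alpha>"
      using filterlim_compose[OF fg_lim Mx] by simp
    have B: "(\<lambda>n. g (M n * x) / g (M n)) \<longlonglongrightarrow> x powr \<rho>"
      using filterlim_compose[OF g_rv[OF x] M_lim] by simp
    have "(\<lambda>n. f (M n * x) / g (M n * x) * (g (M n * x) / g (M n))) \<longlonglongrightarrow> \<alpha> * x powr \<rho>"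
      using tendsto_mult[OF A B] .
    moreover have E: "f (M n * x) / g (M n * x) * (g (M n * x) / g (M n)) = f (M n * x) / g (M n)" for n
    proof -
      have "g (M n * x) > 0" using g_pos M_pos x by simp
      then show "f (M n * x) / g (M n * x) * (g (M n * x) / g (M n)) = f (M n * x) / g (M n)" by simp
    qed
    ultimately show ?thesis by (simp only: E)
  qed
  have mono_bound: "f (M n * a) / g (M n) \<le> f (M n * b) / g (M n)"
    if "0 < a" "a \<le> b" for a b n
  proof -
    have "M n * a \<le> M n * b" using M_pos[of n] that by simp
    moreover have "M n * a \<in> {0<..}" "M n * b \<in> {0<..}" using M_pos[of n] that by auto
    ultimately have "f (M n * a) \<le> f (M n * b)"
      using mono_onD[OF f_mono] by blast
    then show ?thesis using g_pos[OF M_pos[of n]] by (simp add: divide_right_mono)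
  qed
  have pwR: "((\<lambda>b. \<alpha> * b powr \<rho>) \<longlongrightarrow> \<alpha> * u powr \<rho>) (at_right u)"
  proof (rule tendsto_mult[OF tendsto_const tendsto_powr2[OF tendsto_ident_at tendsto_const _ rho_pos]])
    show "\<forall>\<^sub>F b in at_right u. 0 \<le> b"
      using eventually_at_right_less[of u] u_nonneg by (auto elim: eventually_mono)
  qed
  show ?thesis
  proof (rule order_tendstoI)
    fix y assume y: "y < \<alpha> * u powr \<rho>"
    show "\<forall>\<^sub>F n in sequentially. y < f (M n * uu n) / g (M n)"
    proof (cases "y < 0")
      case True
      have "0 < f (M n * uu n) / g (M n)" for n
        by (intro divide_pos_pos f_pos g_pos mult_pos_pos M_pos uu_pos)
      then show ?thesis using True by (intro always_eventually allI) (meson less_trans)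
    next
      case False
      have "u \<noteq> 0"
      proof
        assume "u = 0"
        then have "\<alpha> * u powr \<rho> = 0" by simp
        then show False using y False by linarith
      qed
      then have "u > 0" using u_nonneg by linarith
      have pwL: "((\<lambda>b. \<alpha> * b powr \<rho>) \<longlongrightarrow> \<alpha> * u powr \<rho>) (at_left u)"
      proof (rule tendsto_mult[OF tendsto_const tendsto_powr2[OF tendsto_ident_at tendsto_const _ rho_pos]])
        show "\<forall>\<^sub>F b in at_left u. 0 \<le> b"
          using order_tendstoD(1)[OF tendsto_ident_at[of u "{..<u}"] \<open>u > 0\<close>] by (auto elim: eventually_mono)
      qed
      have "\<forall>\<^sub>F b in at_left u. y < \<alpha> * b powr \<rho>"
        using order_tendstoD(1)[OF pwL y] .
      then obtain c where c: "c < u" and hc: "\<And>z. c < z \<Longrightarrow> z < u \<Longrightarrow> y < \<alpha> * z powr \<rho>"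
        unfolding eventually_at_left_field by blast
      define m where "m = max c (u/2)"
      have m: "c \<le> m" "u/2 \<le> m" "m < u" using c \<open>u > 0\<close> by (auto simp: m_def)
      define a where "a = (m + u) / 2"
      have a12: "0 < a" "a < u" "c < a" using m \<open>u > 0\<close> by (auto simp: a_def)
      have a: "0 < a" "a < u" "y < \<alpha> * a powr \<rho>"
        using a12 hc[of a] by auto
      have e1: "\<forall>\<^sub>F n in sequentially. a < uu n"
        using order_tendstoD(1)[OF uu_lim a(2)] .
      have e2: "\<forall>\<^sub>F n in sequentially. y < f (M n * a) / g (M n)"
        using order_tendstoD(1)[OF key[OF a(1)] a(3)] .
      show ?thesis using e1 e2
      proof eventually_elim
        case (elim n)
        then show ?case using mono_bound[of a "uu n" n] a(1) by linarith
      qed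
    qed
  next
    fix y assume y: "y > \<alpha> * u powr \<rho>"
    have "\<forall>\<^sub>F b in at_right u. \<alpha> * b powr \<rho> < y"
      using order_tendstoD(2)[OF pwR y] .
    then obtain c where c: "c > u" and hc: "\<And>z. u < z \<Longrightarrow> z < c \<Longrightarrow> \<alpha> * z powr \<rho> < y"
      unfolding eventually_at_right_field by blast
    define b where "b = (u + c) / 2"
    have b12: "0 < b" "u < b" "b < c" using c u_nonneg by (auto simp: b_def)
    have b: "0 < b" "u < b" "\<alpha> * b powr \<rho> < y"
      using b12 hc[of b] by auto
    have e1: "\<forall>\<^sub>F n in sequentially. uu n < b"
      using order_tendstoD(2)[OF uu_lim b(2)] .
    have e2: "\<forall>\<^sub>F n in sequentially. f (M n * b) / g (M n) < y"
      using order_tendstoD(2)[OF key[OF b(1)] b(3)] .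
    show "\<forall>\<^sub>F n in sequentially. f (M n * uu n) / g (M n) < y" using e1 e2
    proof eventually_elim
      case (elim n)
      then show ?case using mono_bound[of "uu n" b n] uu_pos[of n] by linarith
    qed
  qed
qed

end
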